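(* Let $v$ be a simple game on $N=\{1,\dots,n\}$ and $i\in N$ a player with $\mathrm{Nuc}_i(v)<1$. Then $\mathrm{Nuc}_i(v)\le\frac12$.
   Context: A simple game on $N$ is a surjective, monotone map $v\colon 2^N\to\{0,1\}$. For $x\in\mathbb{R}^n$ and $S\subseteq N$ let $x(S)=\sum_{j\in S}x_j$ and the excess $e(S,x)=v(S)-x(S)$. Let $E(x)\in\mathbb{R}^{2^n}$ be the vector of all excesses $e(S,x)$, $S\subseteq N$, sorted in weakly decreasing order. $x$ is lexicographically smaller than $y$ if $E_k(x)<E_k(y)$ for the smallest $k$ with $E_k(x)\ne E_k(y)$. The nucleolus $\mathrm{Nuc}(v)$ is the unique lexicographically minimal vector $x$ among all $x\in\mathbb{R}^n$ with $x(N)\le 1$; for simple games it satisfies $\mathrm{Nuc}(v)\in\mathbb{R}^n_{\ge0}$ and $\sum_j\mathrm{Nuc}_j(v)=1$. *)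

theory Defs
  imports Complex_Main "HOL-Library.Multiset"
begin

text \<open>Players form a finite type 'n (so N = UNIV, |N| = n), payoff vectors are
  functions 'n \<Rightarrow> real, i.e. elements of R^n.\<close>

definition simple_game :: "('n set \<Rightarrow> real) \<Rightarrow> bool" where
  "simple_game v \<longleftrightarrow> range v = {0, 1} \<and> mono v"

definition coal_sum :: "('n \<Rightarrow> real) \<Rightarrow> 'n set \<Rightarrow> real" where
  "coal_sum x S = (\<Sum>j\<in>S. x j)"

definition excess :: "('n set \<Rightarrow> real) \<Rightarrow> 'n set \<Rightarrow> ('n \<Rightarrow> real) \<Rightarrow> real" where
  "excess v S x = v S - coal_sum x S"

definition excess_vector :: "('n::finite set \<Rightarrow> real) \<Rightarrow> ('n \<Rightarrow> real) \<Rightarrow> real list" where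
  "excess_vector v x =
     rev (sorted_list_of_multiset (image_mset (\<lambda>S. excess v S x) (mset_set (Pow (UNIV :: 'n set)))))"

definition lex_smaller :: "real list \<Rightarrow> real list \<Rightarrow> bool" where
  "lex_smaller xs ys \<longleftrightarrow>
     (\<exists>k < length xs. k < length ys \<and> take k xs = take k ys \<and> xs ! k < ys ! k)"

definition lex_minimal :: "('n::finite set \<Rightarrow> real) \<Rightarrow> ('n \<Rightarrow> real) \<Rightarrow> bool" where
  "lex_minimal v x \<longleftrightarrow> coal_sum x UNIV \<le> 1 \<and>
     (\<forall>y. coal_sum y UNIV \<le> 1 \<longrightarrow> \<not> lex_smaller (excess_vector v y) (excess_vector v x))"

definition nucleolus :: "('n::finite set \<Rightarrow> real) \<Rightarrow> ('n \<Rightarrow> real)" where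
  "nucleolus v = (THE x. lex_minimal v x)"

end

theory Submission
  imports Defs "HOL-Analysis.Analysis"
begin


definition LL :: "'a set \<Rightarrow> ('a \<Rightarrow> real) \<Rightarrow> real list" where
  "LL A f = rev (sorted_list_of_multiset (image_mset f (mset_set A)))"

lemma mset_LL: "mset (LL A f) = image_mset f (mset_set A)"
  by (simp add: LL_def)

lemma length_LL: "finite A \<Longrightarrow> length (LL A f) = card A"
proof -
  assume "finite A"
  have "length (LL A f) = size (mset (LL A f))" by (rule size_mset[symmetric])
  also have "\<dots> = card A" by (simp add: mset_LL)
  finally show ?thesis .
qed

lemma filter_LL: "finite A \<Longrightarrow> length (filter P (LL A f)) = card {a\<in>A. P (f a)}"
proof -
  assume A: "finite A"
  have "length (filter P (LL A f)) = size (mset (filter P (LL A f)))"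
    by (rule size_mset[symmetric])
  also have "\<dots> = size (filter_mset P (mset (LL A f)))"
    by (simp only: mset_filter)
  also have "\<dots> = size (image_mset f (filter_mset (\<lambda>x. P (f x)) (mset_set A)))"
    by (simp only: mset_LL image_mset_filter_mset_swap)
  also have "\<dots> = card {a\<in>A. P (f a)}" using A by simp
  finally show ?thesis .
qed

lemma sorted_LL: "sorted_wrt (\<ge>) (LL A f)"
  unfolding LL_def sorted_wrt_rev by simp

lemma LL_mono_nth:
  assumes "i \<le> j" "j < length (LL A f)"
  shows "LL A f ! j \<le> LL A f ! i"
proof (cases "i = j")
  case True then show ?thesis by simp
next
  case False
  then have "i < j" using assms by simp
  from sorted_wrt_nth_less[OF sorted_LL this assms(2)] show ?thesis .
qed

lemma LL_nth_ge:
  assumes A: "finite A" and k: "k < card A"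
  shows "t \<le> LL A f ! k \<longleftrightarrow> k < card {a\<in>A. t \<le> f a}"
proof -
  let ?L = "LL A f"
  have len: "length ?L = card A" using A by (rule length_LL)
  have "card {a\<in>A. t \<le> f a} = length (filter (\<lambda>u. t \<le> u) ?L)"
    using filter_LL[OF A, of "\<lambda>u. t \<le> u" f] by simp
  also have "\<dots> = card {i. i < length ?L \<and> t \<le> ?L ! i}"
    by (rule length_filter_conv_card)
  finally have c: "card {a\<in>A. t \<le> f a} = card {i. i < length ?L \<and> t \<le> ?L ! i}" .
  show ?thesis
  proof
    assume h: "t \<le> ?L ! k"
    have "{0..k} \<subseteq> {i. i < length ?L \<and> t \<le> ?L ! i}"
    proof
      fix i assume "i \<in> {0..k}"
      then have i: "i \<le> k" by simp
      then have "?L ! k \<le> ?L ! i" using LL_mono_nth[of i k A f] k len by simp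
      then show "i \<in> {i. i < length ?L \<and> t \<le> ?L ! i}" using i k len h by simp
    qed
    then have "card {0..k} \<le> card {i. i < length ?L \<and> t \<le> ?L ! i}"
      by (rule card_mono[rotated]) simp
    then show "k < card {a\<in>A. t \<le> f a}" using c by simp
  next
    assume h: "k < card {a\<in>A. t \<le> f a}"
    show "t \<le> ?L ! k"
    proof (rule ccontr)
      assume nt: "\<not> t \<le> ?L ! k"
      have "{i. i < length ?L \<and> t \<le> ?L ! i} \<subseteq> {0..<k}"
      proof
        fix i assume "i \<in> {i. i < length ?L \<and> t \<le> ?L ! i}"
        then have i: "i < length ?L" "t \<le> ?L ! i" by auto
        show "i \<in> {0..<k}"
        proof (rule ccontr)
          assume "i \<notin> {0..<k}"
          then have "k \<le> i" by simp
          then have "?L ! i \<le> ?L ! k" using LL_mono_nth[of k i A f] i by simp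
          then show False using nt i by simp
        qed
      qed
      then have "card {i. i < length ?L \<and> t \<le> ?L ! i} \<le> card {0..<k}"
        by (rule card_mono[rotated]) simp
      then show False using h c by simp
    qed
  qed
qed



lemma lex_thr:
  assumes A: "finite A"
    and lt: "card {a\<in>A. t \<le> g a} < card {a\<in>A. t \<le> f a}"
    and le: "\<And>s. s > t \<Longrightarrow> card {a\<in>A. s \<le> g a} \<le> card {a\<in>A. s \<le> f a}"
  shows "lex_smaller (LL A g) (LL A f)"
proof -
  define k0 where "k0 = card {a\<in>A. t \<le> g a}"
  have cf: "card {a\<in>A. t \<le> f a} \<le> card A" using A by (intro card_mono) auto
  have k0A: "k0 < card A" using lt cf k0_def by simp
  have lenf: "length (LL A f) = card A" and leng: "length (LL A g) = card A"
    using A by (simp_all add: length_LL)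
  have f0: "t \<le> LL A f ! k0" using LL_nth_ge[OF A k0A] lt k0_def by simp
  have g0: "\<not> t \<le> LL A g ! k0" using LL_nth_ge[OF A k0A] k0_def by simp
  define j where "j = (LEAST j. LL A g ! j \<noteq> LL A f ! j)"
  have ex: "LL A g ! k0 \<noteq> LL A f ! k0" using f0 g0 by auto
  have jle: "j \<le> k0" unfolding j_def using ex by (rule Least_le)
  have jd: "LL A g ! j \<noteq> LL A f ! j" unfolding j_def using ex by (rule LeastI)
  have before: "\<And>i. i < j \<Longrightarrow> LL A g ! i = LL A f ! i"
  proof -
    fix i assume "i < j"
    then have "\<not> (LL A g ! i \<noteq> LL A f ! i)" unfolding j_def by (rule not_less_Least)
    then show "LL A g ! i = LL A f ! i" by simp
  qed
  have jA: "j < card A" using jle k0A by simp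
  have tk: "take j (LL A g) = take j (LL A f)"
    by (rule nth_equalityI) (use before jA lenf leng in auto)
  show ?thesis
  proof (cases "LL A g ! j < LL A f ! j")
    case True
    then show ?thesis unfolding lex_smaller_def using tk jA lenf leng by auto
  next
    case False
    then have gt: "LL A f ! j < LL A g ! j" using jd by simp
    define s where "s = LL A g ! j"
    have "LL A f ! k0 \<le> LL A f ! j" using LL_mono_nth[of j k0 A f] jle k0A lenf by simp
    then have st: "s > t" using f0 gt s_def by simp
    have "j < card {a\<in>A. s \<le> g a}" using LL_nth_ge[OF A jA, of s g] s_def by simp
    moreover have "\<not> j < card {a\<in>A. s \<le> f a}" using LL_nth_ge[OF A jA, of s f] s_def gt by simp
    ultimately show ?thesis using le[OF st] by simp
  qed
qed

lemma lex_P: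
  assumes A: "finite A" and T: "T \<subseteq> A" "T \<noteq> {}"
    and same: "\<And>a. a \<in> A \<Longrightarrow> a \<notin> T \<Longrightarrow> g a = f a"
    and less: "\<And>a. a \<in> T \<Longrightarrow> g a < Max (f ` T)"
  shows "lex_smaller (LL A g) (LL A f)"
proof -
  let ?t = "Max (f ` T)"
  have fT: "finite T" by (rule finite_subset[OF T(1) A])
  have "?t \<in> f ` T" using fT T by (intro Max_in) auto
  then obtain a0 where a0: "a0 \<in> T" "f a0 = ?t" by auto
  have sub: "\<And>s. s \<ge> ?t \<Longrightarrow> {a\<in>A. s \<le> g a} \<subseteq> {a\<in>A. s \<le> f a}"
  proof
    fix s a assume st: "s \<ge> ?t" and a: "a \<in> {a\<in>A. s \<le> g a}"
    show "a \<in> {a\<in>A. s \<le> f a}"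
    proof (cases "a \<in> T")
      case True
      then have "g a < ?t" by (rule less)
      then show ?thesis using a st by simp
    next
      case False
      then show ?thesis using a same[of a] by simp
    qed
  qed
  show ?thesis
  proof (rule lex_thr[OF A, of ?t])
    have "a0 \<in> {a\<in>A. ?t \<le> f a}" "a0 \<notin> {a\<in>A. ?t \<le> g a}"
      using a0 less[OF a0(1)] T by auto
    then have "{a\<in>A. ?t \<le> g a} \<subset> {a\<in>A. ?t \<le> f a}"
      using sub[of ?t] by blast
    then show "card {a\<in>A. ?t \<le> g a} < card {a\<in>A. ?t \<le> f a}"
      using A by (intro psubset_card_mono) auto
  next
    fix s assume "s > ?t"
    then show "card {a\<in>A. s \<le> g a} \<le> card {a\<in>A. s \<le> f a}"
      using sub[of s] A by (intro card_mono) auto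
  qed
qed

lemma lex_total:
  assumes "length xs = length ys" "xs \<noteq> ys"
  shows "lex_smaller xs ys \<or> lex_smaller ys xs"
proof -
  have ex: "\<exists>k. k < length xs \<and> xs ! k \<noteq> ys ! k"
  proof (rule ccontr)
    assume "\<not> ?thesis"
    then have "xs = ys" using assms(1) by (intro nth_equalityI) auto
    then show False using assms(2) by simp
  qed
  define j where "j = (LEAST j. j < length xs \<and> xs ! j \<noteq> ys ! j)"
  have j: "j < length xs \<and> xs ! j \<noteq> ys ! j" unfolding j_def by (rule LeastI_ex[OF ex])
  have before: "\<And>i. i < j \<Longrightarrow> xs ! i = ys ! i"
  proof -
    fix i assume ij: "i < j"
    then have "\<not> (i < length xs \<and> xs ! i \<noteq> ys ! i)" unfolding j_def by (rule not_less_Least)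
    then show "xs ! i = ys ! i" using ij j by simp
  qed
  have tk: "take j xs = take j ys"
    by (rule nth_equalityI) (use before j assms in auto)
  show ?thesis
  proof (cases "xs ! j < ys ! j")
    case True then show ?thesis unfolding lex_smaller_def using tk j assms by auto
  next
    case False
    then have "ys ! j < xs ! j" using j by simp
    then show ?thesis unfolding lex_smaller_def using tk j assms by auto
  qed
qed

lemma LL_lip:
  assumes A: "finite A" and k: "k < card A" and d: "\<And>a. a \<in> A \<Longrightarrow> f a \<le> g a + d"
  shows "LL A f ! k \<le> LL A g ! k + d"
proof -
  let ?t = "LL A f ! k"
  have "k < card {a\<in>A. ?t \<le> f a}" using LL_nth_ge[OF A k, of ?t f] by simp
  also have "card {a\<in>A. ?t \<le> f a} \<le> card {a\<in>A. ?t - d \<le> g a}"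
  proof (rule card_mono)
    show "finite {a\<in>A. ?t - d \<le> g a}" using A by simp
    show "{a\<in>A. ?t \<le> f a} \<subseteq> {a\<in>A. ?t - d \<le> g a}"
    proof
      fix a assume "a \<in> {a\<in>A. ?t \<le> f a}"
      then have a: "a \<in> A" "?t \<le> f a" by auto
      have "f a \<le> g a + d" by (rule d[OF a(1)])
      then show "a \<in> {a\<in>A. ?t - d \<le> g a}" using a by simp
    qed
  qed
  finally have "?t - d \<le> LL A g ! k" using LL_nth_ge[OF A k] by simp
  then show ?thesis by simp
qed

lemma LL_ge_elem:
  assumes A: "finite A" and a: "a \<in> A"
  shows "f a \<le> LL A f ! 0"
proof -
  have c: "0 < card A" using A a by (auto simp: card_gt_0_iff)
  have "0 < card {b\<in>A. f a \<le> f b}" using A a by (subst card_gt_0_iff) auto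
  then show ?thesis using LL_nth_ge[OF A c] by simp
qed



lemma EV_LL: "excess_vector v x = LL (Pow UNIV) (\<lambda>S. excess v S x)"
  unfolding excess_vector_def LL_def by simp

lemma excess_eq: "excess v S x = v S - sum x S"
  unfolding excess_def coal_sum_def by simp

lemma better:
  fixes v :: "'n::finite set \<Rightarrow> real"
  assumes lm: "lex_minimal v x" and y: "coal_sum y UNIV \<le> 1" and T: "T \<noteq> {}"
    and same: "\<And>S. S \<notin> T \<Longrightarrow> excess v S y = excess v S x"
    and less: "\<And>S. S \<in> T \<Longrightarrow> excess v S y < Max ((\<lambda>S. excess v S x) ` T)"
  shows False
proof -
  have "lex_smaller (LL (Pow UNIV) (\<lambda>S. excess v S y)) (LL (Pow UNIV) (\<lambda>S. excess v S x))"
    by (rule lex_P[where T=T]) (use T same less in auto)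
  then show False using lm y unfolding lex_minimal_def EV_LL by blast
qed

lemma sum_upd:
  fixes x :: "'n::finite \<Rightarrow> real"
  shows "sum (\<lambda>k. x k + (if k = j then e else 0) - (if k = i then e else 0)) S
     = sum x S + (if j \<in> S then e else 0) - (if i \<in> S then e else 0)"
  by (simp add: sum.distrib sum_subtractf sum.delta)

lemma transfer:
  fixes v :: "'n::finite set \<Rightarrow> real"
  assumes lm: "lex_minimal v x" and ij: "i \<noteq> j" and S0: "j \<in> S0" "i \<notin> S0"
    and lt: "\<And>S. i \<in> S \<Longrightarrow> j \<notin> S \<Longrightarrow> excess v S x < excess v S0 x"
  shows False
proof -
  let ?I = "{S. i \<in> S \<and> j \<notin> S}"
  define Mi where "Mi = Max ((\<lambda>S. excess v S x) ` ?I)"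
  have "{i} \<in> ?I" using ij by simp
  then have "(\<lambda>S. excess v S x) ` ?I \<noteq> {}" by blast
  then have "Mi \<in> (\<lambda>S. excess v S x) ` ?I" unfolding Mi_def by (intro Max_in) simp_all
  then obtain S1 where S1: "S1 \<in> ?I" "Mi = excess v S1 x" by (rule imageE)
  then have MiS0: "Mi < excess v S0 x" using lt[of S1] by simp
  have MiS: "\<And>S. S \<in> ?I \<Longrightarrow> excess v S x \<le> Mi" unfolding Mi_def by (intro Max_ge) auto
  define e where "e = (excess v S0 x - Mi) / 2"
  have e0: "e > 0" using MiS0 e_def by simp
  define y where "y = (\<lambda>k. x k + (if k = j then e else 0) - (if k = i then e else 0))"
  have sy: "\<And>S. sum y S = sum x S + (if j \<in> S then e else 0) - (if i \<in> S then e else 0)"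
    unfolding y_def by (rule sum_upd)
  have ey: "\<And>S. excess v S y = excess v S x - (if j \<in> S then e else 0) + (if i \<in> S then e else 0)"
    using sy by (simp add: excess_eq)
  let ?T = "{S. (i \<in> S) \<noteq> (j \<in> S)}"
  have S0T: "S0 \<in> ?T" using S0 by simp
  have MT: "excess v S0 x \<le> Max ((\<lambda>S. excess v S x) ` ?T)" using S0T by (intro Max_ge) auto
  show False
  proof (rule better[OF lm, of y ?T])
    show "coal_sum y UNIV \<le> 1" using lm sy unfolding lex_minimal_def coal_sum_def by simp
    show "?T \<noteq> {}" using S0T by blast
    show "\<And>S. S \<notin> ?T \<Longrightarrow> excess v S y = excess v S x" using ey by auto
    fix S assume ST: "S \<in> ?T"
    show "excess v S y < Max ((\<lambda>S. excess v S x) ` ?T)"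
    proof (cases "i \<in> S")
      case True
      then have "j \<notin> S" using ST by simp
      then have "excess v S y = excess v S x + e" "excess v S x \<le> Mi" using ey True MiS by auto
      moreover have "Mi + e < excess v S0 x" using MiS0 by (simp add: e_def field_simps)
      ultimately show ?thesis using MT by linarith
    next
      case False
      then have "j \<in> S" using ST by simp
      then have "excess v S y = excess v S x - e" using ey False by auto
      moreover have "excess v S x \<le> Max ((\<lambda>S. excess v S x) ` ?T)" using ST by (intro Max_ge) auto
      ultimately show ?thesis using e0 by linarith
    qed
  qed
qed

lemma unique:
  fixes v :: "'n::finite set \<Rightarrow> real"
  assumes lx: "lex_minimal v x" and ly: "lex_minimal v y"
  shows "x = y"
proof (rule ccontr)
  assume ne: "x \<noteq> y"
  then obtain j where j: "x j \<noteq> y j" by auto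
  define z where "z = (\<lambda>k. (x k + y k) / 2)"
  have sz: "\<And>S. sum z S = (sum x S + sum y S) / 2"
    unfolding z_def by (simp add: sum.distrib sum_divide_distrib[symmetric])
  have ez: "\<And>S. excess v S z = (excess v S x + excess v S y) / 2"
    using sz by (simp add: excess_eq field_simps)
  have "sum x UNIV \<le> 1" "sum y UNIV \<le> 1" using lx ly unfolding lex_minimal_def coal_sum_def by auto
  moreover have "sum z UNIV = (sum x UNIV + sum y UNIV) / 2" by (rule sz)
  ultimately have cz: "coal_sum z UNIV \<le> 1" unfolding coal_sum_def by (simp add: field_simps)
  let ?T = "{S. excess v S x \<noteq> excess v S y}"
  have "{j} \<in> ?T" using j by (simp add: excess_eq)
  then have Tne: "?T \<noteq> {}" by blast
  let ?Mx = "Max ((\<lambda>S. excess v S x) ` ?T)" and ?My = "Max ((\<lambda>S. excess v S y) ` ?T)"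
  have bx: "\<And>S. S \<in> ?T \<Longrightarrow> excess v S x \<le> ?Mx" by (intro Max_ge) auto
  have by': "\<And>S. S \<in> ?T \<Longrightarrow> excess v S y \<le> ?My" by (intro Max_ge) auto
  show False
  proof (cases "?My \<le> ?Mx")
    case True
    show False
    proof (rule better[OF lx cz Tne])
      show "\<And>S. S \<notin> ?T \<Longrightarrow> excess v S z = excess v S x"
      proof -
        fix S assume "S \<notin> ?T"
        then show "excess v S z = excess v S x" using ez[of S] by simp
      qed
      fix S assume ST: "S \<in> ?T"
      then have "excess v S x \<noteq> excess v S y" "excess v S x \<le> ?Mx" "excess v S y \<le> ?My"
        using bx[of S] by'[of S] by auto
      then have h: "excess v S x < excess v S y \<or> excess v S y < excess v S x"
        "excess v S x \<le> ?Mx" "excess v S y \<le> ?My" by auto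
      have "2 * excess v S z = excess v S x + excess v S y" using ez[of S] by simp
      then show "excess v S z < ?Mx" using h True by linarith
    qed
  next
    case False
    show False
    proof (rule better[OF ly cz Tne])
      show "\<And>S. S \<notin> ?T \<Longrightarrow> excess v S z = excess v S y"
      proof -
        fix S assume "S \<notin> ?T"
        then show "excess v S z = excess v S y" using ez[of S] by simp
      qed
      fix S assume ST: "S \<in> ?T"
      then have "excess v S x \<noteq> excess v S y" "excess v S x \<le> ?Mx" "excess v S y \<le> ?My"
        using bx[of S] by'[of S] by auto
      then have h: "excess v S x < excess v S y \<or> excess v S y < excess v S x"
        "excess v S x \<le> ?Mx" "excess v S y \<le> ?My" by auto
      have "2 * excess v S z = excess v S x + excess v S y" using ez[of S] by simp
      then show "excess v S z < ?My" using h False by linarith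
    qed
  qed
qed



lemma game_facts:
  fixes v :: "'n set \<Rightarrow> real"
  assumes g: "simple_game v"
  shows "v S = 0 \<or> v S = 1" "v {} = 0" "v UNIV = 1" "S \<subseteq> T \<Longrightarrow> v S \<le> v T"
proof -
  have r: "range v = {0,1}" and m: "mono v" using g unfolding simple_game_def by auto
  have vr: "\<And>S. v S = 0 \<or> v S = 1"
  proof -
    fix S
    have "v S \<in> range v" by (rule rangeI)
    then show "v S = 0 \<or> v S = 1" using r by simp
  qed
  show "v S = 0 \<or> v S = 1" by (rule vr)
  show mo: "S \<subseteq> T \<Longrightarrow> v S \<le> v T" using m by (rule monoD)
  have "1 \<in> range v" using r by simp
  then obtain A where A: "v A = 1" by (rule rangeE) simp
  have "v A \<le> v UNIV" using m by (rule monoD) simp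
  then show "v UNIV = 1" using A vr[of UNIV] by auto
  have "0 \<in> range v" using r by simp
  then obtain B where B: "v B = 0" by (rule rangeE) simp
  have "v {} \<le> v B" using m by (rule monoD) simp
  then show "v {} = 0" using B vr[of "{}"] by auto
qed

lemma sum_split:
  fixes x :: "'n::finite \<Rightarrow> real"
  shows "sum x UNIV = sum x S + sum x (- S)"
proof -
  have "sum x UNIV = sum x (UNIV - S) + sum x S" by (rule sum.subset_diff) auto
  then show ?thesis by (simp add: Compl_eq_Diff_UNIV)
qed

lemma veto_lemma:
  fixes v :: "'n set \<Rightarrow> real"
  assumes g: "simple_game v" and vi: "v (- {i}) = 0" and S: "i \<notin> S"
  shows "v S = 0"
proof -
  have "S \<subseteq> - {i}" using S by auto
  then have "v S \<le> v (- {i})" by (rule game_facts(4)[OF g])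
  then have "v S \<le> 0" using vi by simp
  then show ?thesis using game_facts(1)[OF g, of S] by auto
qed

lemma sum_one:
  fixes v :: "'n::finite set \<Rightarrow> real"
  assumes lm: "lex_minimal v x"
  shows "coal_sum x UNIV = 1"
proof (rule ccontr)
  assume "coal_sum x UNIV \<noteq> 1"
  then have lt: "sum x UNIV < 1" using lm unfolding lex_minimal_def coal_sum_def by simp
  define d where "d = (1 - sum x UNIV) / card (UNIV::'n set)"
  have cpos: "card (UNIV::'n set) > 0" by (simp add: card_gt_0_iff)
  have d0: "d > 0" using lt cpos d_def by simp
  define y where "y = (\<lambda>k. x k + d)"
  have sy: "\<And>S. sum y S = sum x S + d * card S" unfolding y_def by (simp add: sum.distrib)
  let ?T = "{S::'n set. S \<noteq> {}}"
  show False
  proof (rule better[OF lm, of y ?T])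
    show "coal_sum y UNIV \<le> 1" using sy[of UNIV] d_def cpos by (simp add: coal_sum_def)
    show "?T \<noteq> {}" by blast
    show "\<And>S. S \<notin> ?T \<Longrightarrow> excess v S y = excess v S x" by (simp add: excess_eq y_def)
    fix S assume ST: "S \<in> ?T"
    then have "card S > 0" by (simp add: card_gt_0_iff)
    then have "excess v S y < excess v S x" using sy[of S] d0 by (simp add: excess_eq)
    moreover have "excess v S x \<le> Max ((\<lambda>S. excess v S x) ` ?T)" using ST by (intro Max_ge) auto
    ultimately show "excess v S y < Max ((\<lambda>S. excess v S x) ` ?T)" by linarith
  qed
qed

lemma nonneg:
  fixes v :: "'n::finite set \<Rightarrow> real"
  assumes g: "simple_game v" and lm: "lex_minimal v x"
  shows "0 \<le> x j"
proof (rule ccontr)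
  assume "\<not> 0 \<le> x j"
  then have xj: "x j < 0" by simp
  note gf = game_facts[OF g]
  have s1: "sum x UNIV = 1" using sum_one[OF lm] by (simp add: coal_sum_def)
  let ?m = "Max ((\<lambda>S. excess v S x) ` UNIV)"
  have "?m \<in> (\<lambda>S. excess v S x) ` UNIV" by (intro Max_in) auto
  then obtain S0 where "?m = excess v S0 x" by (rule imageE)
  then have S0: "excess v S0 x = ?m" by simp
  have mge: "\<And>S. excess v S x \<le> ?m" by (intro Max_ge) auto
  have ins: "\<And>S. j \<notin> S \<Longrightarrow> excess v S x < excess v (insert j S) x"
  proof -
    fix S assume "j \<notin> S"
    then have "sum x (insert j S) = x j + sum x S" by simp
    moreover have "v S \<le> v (insert j S)" by (rule gf(4)) auto
    ultimately show "excess v S x < excess v (insert j S) x" using xj by (simp add: excess_eq)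
  qed
  have jS0: "j \<in> S0"
  proof (rule ccontr)
    assume "j \<notin> S0"
    then have "excess v S0 x < excess v (insert j S0) x" by (rule ins)
    then show False using mge[of "insert j S0"] S0 by linarith
  qed
  have "\<exists>k. k \<notin> S0 \<and> x k > 0"
  proof (rule ccontr)
    assume "\<not> ?thesis"
    then have np: "\<And>k. k \<notin> S0 \<Longrightarrow> x k \<le> 0" by auto
    have "sum x UNIV = sum x S0 + sum x (- S0)" by (rule sum_split)
    moreover have "sum x (- S0) \<le> 0" using np by (intro sum_nonpos) auto
    moreover have "v S0 \<le> 1" using gf(1)[of S0] by auto
    ultimately have "excess v S0 x \<le> 0" using s1 by (simp add: excess_eq)
    moreover have "excess v {j} x > 0" using xj gf(1)[of "{j}"] by (auto simp: excess_eq)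
    ultimately show False using mge[of "{j}"] S0 by linarith
  qed
  then obtain k where k: "k \<notin> S0" "x k > 0" by auto
  have kj: "k \<noteq> j" using k jS0 by auto
  show False
  proof (rule transfer[OF lm kj jS0 k(1)])
    fix S assume "k \<in> S" "j \<notin> S"
    then show "excess v S x < excess v S0 x" using ins[of S] mge[of "insert j S"] S0 by linarith
  qed
qed

lemma main:
  fixes v :: "'n::finite set \<Rightarrow> real"
  assumes g: "simple_game v" and lm: "lex_minimal v x" and xi: "x i < 1"
  shows "x i \<le> 1/2"
proof (rule ccontr)
  assume "\<not> x i \<le> 1/2"
  then have xi2: "x i > 1/2" by simp
  note gf = game_facts[OF g]
  have s1: "sum x UNIV = 1" using sum_one[OF lm] by (simp add: coal_sum_def)
  have nn: "\<And>k. 0 \<le> x k" using nonneg[OF g lm] .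
  have split: "\<And>S. sum x UNIV = sum x S + sum x (- S)" by (rule sum_split)
  have sumS: "\<And>S. i \<in> S \<Longrightarrow> x i \<le> sum x S"
    using nn by (intro member_le_sum) auto
  have eS0: "\<And>k. excess v (- {k}) x = v (- {k}) - 1 + x k"
  proof -
    fix k
    have "sum x UNIV = x k + sum x (- {k})" using split[of "{k}"] by simp
    then show "excess v (- {k}) x = v (- {k}) - 1 + x k" using s1 by (simp add: excess_eq)
  qed
  show False
  proof (cases "v (- {i}) = 1")
    case True
    have "- {i} \<noteq> {}" using True gf(2) by auto
    then obtain j where j: "j \<noteq> i" by auto
    show False
    proof (rule transfer[OF lm _ _ _, of i j "- {i}"])
      show "i \<noteq> j" "j \<in> - {i}" "i \<notin> - {i}" using j by auto
      fix S assume "i \<in> S" "j \<notin> S"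
      then have "excess v S x \<le> 1 - x i" using sumS[of S] gf(1)[of S] by (auto simp: excess_eq)
      then show "excess v S x < excess v (- {i}) x" using eS0[of i] True xi2 by simp
    qed
  next
    case False
    then have vi0: "v (- {i}) = 0" using gf(1) by blast
    have veto: "\<And>S. i \<notin> S \<Longrightarrow> v S = 0" using veto_lemma[OF g vi0] .
    have ep: "\<And>S. excess v S x \<le> 0"
    proof (rule ccontr)
      fix S0 assume "\<not> excess v S0 x \<le> 0"
      let ?m = "Max ((\<lambda>S. excess v S x) ` UNIV)"
      have "excess v S0 x \<le> ?m" by (rule Max_ge) auto
      then have mpos: "?m > 0" using \<open>\<not> excess v S0 x \<le> 0\<close> by linarith
      have "?m \<in> (\<lambda>S. excess v S x) ` UNIV" by (intro Max_in) auto
      then obtain S1 where "?m = excess v S1 x" by (rule imageE)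
      then have S1: "excess v S1 x = ?m" by simp
      define y where "y = (\<lambda>k. if k = i then 1 else (0::real))"
      have sy: "\<And>S. sum y S = (if i \<in> S then 1 else 0)" unfolding y_def by (simp add: sum.delta)
      have ey: "\<And>S. excess v S y \<le> 0"
      proof -
        fix S
        show "excess v S y \<le> 0"
        proof (cases "i \<in> S")
          case True
          then show ?thesis using sy[of S] gf(1)[of S] by (auto simp: excess_eq)
        next
          case False
          then show ?thesis using sy[of S] veto[of S] by (simp add: excess_eq)
        qed
      qed
      let ?T = "{S. excess v S y \<noteq> excess v S x}"
      have S1T: "S1 \<in> ?T" using ey[of S1] S1 mpos by auto
      show False
      proof (rule better[OF lm, of y ?T])
        show "coal_sum y UNIV \<le> 1" using sy by (simp add: coal_sum_def)
        show "?T \<noteq> {}" using S1T by blast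
        show "\<And>S. S \<notin> ?T \<Longrightarrow> excess v S y = excess v S x" by auto
        fix S assume "S \<in> ?T"
        have "excess v S1 x \<le> Max ((\<lambda>S. excess v S x) ` ?T)" using S1T by (intro Max_ge) auto
        then show "excess v S y < Max ((\<lambda>S. excess v S x) ` ?T)" using ey[of S] S1 mpos by linarith
      qed
    qed
    have "sum x (- {i}) = 1 - x i" using split[of "{i}"] s1 by simp
    then have "sum x (- {i}) > 0" using xi by simp
    have "\<exists>k\<in>- {i}. x k > 0"
    proof (rule ccontr)
      assume "\<not> ?thesis"
      then have "sum x (- {i}) \<le> 0" by (intro sum_nonpos) (auto simp: not_less)
      then show False using \<open>sum x (- {i}) > 0\<close> by simp
    qed
    then obtain k where k: "k \<in> - {i}" "x k > 0" by blast
    have vk: "v (- {k}) = 0"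
    proof (rule ccontr)
      assume "v (- {k}) \<noteq> 0"
      then have "v (- {k}) = 1" using gf(1) by blast
      then show False using ep[of "- {k}"] eS0[of k] k by simp
    qed
    have vetok: "\<And>S. k \<notin> S \<Longrightarrow> v S = 0" using veto_lemma[OF g vk] .
    show False
    proof (rule transfer[OF lm _ _ _, of i k "- {i}"])
      show "i \<noteq> k" "k \<in> - {i}" "i \<notin> - {i}" using k by auto
      fix S assume "i \<in> S" "k \<notin> S"
      then have "excess v S x \<le> - x i" using sumS[of S] vetok[of S] by (auto simp: excess_eq)
      then show "excess v S x < excess v (- {i}) x" using eS0[of i] vi0 xi2 by simp
    qed
  qed
qed



lemma lip_cont:
  fixes f :: "real^'n \<Rightarrow> real"
  assumes "\<And>z w. f z \<le> f w + C * dist z w" "0 \<le> C"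
  shows "continuous_on UNIV f"
proof (rule lipschitz_on_continuous_on)
  show "C-lipschitz_on UNIV f"
  proof (rule lipschitz_onI)
    fix z w :: "real^'n"
    have "f z \<le> f w + C * dist z w" "f w \<le> f z + C * dist w z" using assms by auto
    then show "dist (f z) (f w) \<le> C * dist z w" by (simp add: dist_real_def dist_commute abs_le_iff)
  qed fact
qed

lemma l1_dist:
  fixes z w :: "real^'n"
  shows "(\<Sum>j\<in>UNIV. \<bar>z$j - w$j\<bar>) \<le> CARD('n) * dist z w"
proof -
  have "(\<Sum>j\<in>UNIV. \<bar>z$j - w$j\<bar>) \<le> (\<Sum>j\<in>(UNIV::'n set). dist z w)"
  proof (rule sum_mono)
    fix j
    have "\<bar>(z - w)$j\<bar> \<le> norm (z - w)" by (rule component_le_norm_cart)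
    then show "\<bar>z$j - w$j\<bar> \<le> dist z w" by (simp add: dist_norm)
  qed
  then show ?thesis by simp
qed

definition Fv :: "('n::finite set \<Rightarrow> real) \<Rightarrow> nat \<Rightarrow> real^'n \<Rightarrow> real" where
  "Fv v k z = excess_vector v (\<lambda>j. z$j) ! k"

lemma Fv_cont:
  fixes v :: "'n::finite set \<Rightarrow> real"
  assumes k: "k < card (Pow (UNIV::'n set))"
  shows "continuous_on UNIV (Fv v k)"
proof (rule lip_cont)
  show "0 \<le> real CARD('n)" by simp
  fix z w :: "real^'n"
  let ?d = "\<Sum>j\<in>UNIV. \<bar>z$j - w$j\<bar>"
  have "\<And>S. excess v S (\<lambda>j. z$j) \<le> excess v S (\<lambda>j. w$j) + ?d"
  proof -
    fix S :: "'n set"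
    have "(\<Sum>j\<in>S. w$j - z$j) \<le> (\<Sum>j\<in>S. \<bar>z$j - w$j\<bar>)" by (intro sum_mono) auto
    also have "\<dots> \<le> ?d" by (intro sum_mono2) auto
    finally show "excess v S (\<lambda>j. z$j) \<le> excess v S (\<lambda>j. w$j) + ?d"
      by (simp add: excess_eq sum_subtractf)
  qed
  then have "Fv v k z \<le> Fv v k w + ?d"
    unfolding Fv_def EV_LL using LL_lip[OF _ k] by simp
  then show "Fv v k z \<le> Fv v k w + real CARD('n) * dist z w" using l1_dist[of z w] by simp
qed

lemma sum_cont: "continuous_on UNIV (\<lambda>z::real^'n. \<Sum>j\<in>UNIV. z$j)"
proof (rule lip_cont)
  show "0 \<le> real CARD('n)" by simp
  fix z w :: "real^'n"
  have "(\<Sum>j\<in>UNIV. z$j) - (\<Sum>j\<in>UNIV. w$j) \<le> (\<Sum>j\<in>UNIV. \<bar>z$j - w$j\<bar>)"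
    by (simp add: sum_subtractf[symmetric]) (intro sum_mono, auto)
  then show "(\<Sum>j\<in>UNIV. z$j) \<le> (\<Sum>j\<in>UNIV. w$j) + real CARD('n) * dist z w"
    using l1_dist[of z w] by simp
qed

fun Kseq :: "('n::finite set \<Rightarrow> real) \<Rightarrow> nat \<Rightarrow> (real^'n) set" where
  "Kseq v 0 = {z. (\<Sum>j\<in>UNIV. z$j) \<le> 1 \<and> Fv v 0 z \<le> Fv v 0 0}"
| "Kseq v (Suc k) = {z \<in> Kseq v k. \<forall>w\<in>Kseq v k. Fv v k z \<le> Fv v k w}"

lemma Kseq_anti: "j \<le> k \<Longrightarrow> Kseq v k \<subseteq> Kseq v j"
  by (induction k) (auto simp: le_Suc_eq)

lemma F0_ge: "excess v S (\<lambda>j. z$j) \<le> Fv v 0 z"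
  unfolding Fv_def EV_LL by (rule LL_ge_elem) auto

lemma K0_compact:
  fixes v :: "'n::finite set \<Rightarrow> real"
  assumes g: "simple_game v"
  shows "compact (Kseq v 0)"
proof -
  note gf = game_facts[OF g]
  let ?c = "Fv v 0 0"
  have c1: "1 \<le> ?c" using F0_ge[of v UNIV 0] gf(3) by (simp add: excess_eq)
  define B where "B = 1 + CARD('n) * ?c"
  have comp: "\<And>z j. z \<in> Kseq v 0 \<Longrightarrow> \<bar>z$j\<bar> \<le> B"
  proof -
    fix z :: "real^'n" and j assume z: "z \<in> Kseq v 0"
    have lo: "\<And>k. - ?c \<le> z$k"
    proof -
      fix k
      have "excess v {k} (\<lambda>j. z$j) \<le> ?c" using F0_ge[of v "{k}" z] z by simp
      then show "- ?c \<le> z$k" using gf(1)[of "{k}"] by (auto simp: excess_eq)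
    qed
    have "(\<Sum>k\<in>-{j}. - ?c) \<le> (\<Sum>k\<in>-{j}. z$k)" using lo by (intro sum_mono) auto
    moreover have "card (-{j}::'n set) \<le> CARD('n)" by (rule card_mono) auto
    moreover have "(\<Sum>k\<in>UNIV. z$k) = z$j + (\<Sum>k\<in>-{j}. z$k)"
      using sum_split[of "\<lambda>k. z$k" "{j}"] by simp
    moreover have "(\<Sum>k\<in>-{j}. - ?c) = - (real (card (-{j}::'n set)) * ?c)" by simp
    moreover have "(\<Sum>k\<in>UNIV. z$k) \<le> 1" using z by simp
    ultimately have h: "z$j \<le> 1 + real (card (-{j}::'n set)) * ?c" and cc: "card (-{j}::'n set) \<le> CARD('n)"
      by linarith+
    have "real (card (-{j}::'n set)) * ?c \<le> real CARD('n) * ?c"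
      using cc c1 by (intro mult_right_mono) auto
    then have zB: "z$j \<le> B" using h B_def by linarith
    have "?c \<le> CARD('n) * ?c"
      using c1 by (simp add: mult_le_cancel_right1 Suc_le_eq)
    then have "- B \<le> z$j" using lo[of j] c1 B_def by linarith
    with zB show "\<bar>z$j\<bar> \<le> B" by simp
  qed
  have "bounded (Kseq v 0)"
    unfolding bounded_iff
  proof (intro exI ballI)
    fix z assume z: "z \<in> Kseq v 0"
    have "norm z \<le> (\<Sum>j\<in>UNIV. \<bar>z$j\<bar>)" by (rule norm_le_l1_cart)
    also have "\<dots> \<le> (\<Sum>j\<in>(UNIV::'n set). B)" using comp[OF z] by (intro sum_mono) auto
    finally show "norm z \<le> CARD('n) * B" by simp
  qed
  moreover have "closed (Kseq v 0)"
  proof -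
    have "Kseq v 0 = {z. (\<Sum>j\<in>UNIV. z$j) \<le> 1} \<inter> {z. Fv v 0 z \<le> ?c}" by auto
    moreover have "closed {z::real^'n. (\<Sum>j\<in>UNIV. z$j) \<le> (\<lambda>_. 1) z}"
      by (rule closed_Collect_le[OF sum_cont continuous_on_const])
    moreover have "closed {z. Fv v 0 z \<le> (\<lambda>_. ?c) z}"
      by (rule closed_Collect_le[OF Fv_cont continuous_on_const]) simp
    ultimately show ?thesis by auto
  qed
  ultimately show ?thesis by (simp add: compact_eq_bounded_closed)
qed

lemma Kseq_ok:
  fixes v :: "'n::finite set \<Rightarrow> real"
  assumes g: "simple_game v"
  shows "k \<le> card (Pow (UNIV::'n set)) \<Longrightarrow> compact (Kseq v k) \<and> Kseq v k \<noteq> {}"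
proof (induction k)
  case 0
  have "0 \<in> Kseq v 0" by (simp add: coal_sum_def)
  then have "Kseq v 0 \<noteq> {}" by blast
  then show ?case using K0_compact[OF g] by simp
next
  case (Suc k)
  then have IH: "compact (Kseq v k)" "Kseq v k \<noteq> {}" by auto
  have kc: "k < card (Pow (UNIV::'n set))" using Suc by simp
  have cont: "continuous_on UNIV (Fv v k)" by (rule Fv_cont[OF kc])
  have eq: "Kseq v (Suc k) = Kseq v k \<inter> (\<Inter>w\<in>Kseq v k. {z. Fv v k z \<le> (\<lambda>_. Fv v k w) z})" by auto
  have "closed (\<Inter>w\<in>Kseq v k. {z. Fv v k z \<le> (\<lambda>_. Fv v k w) z})"
    by (intro closed_INT ballI closed_Collect_le[OF cont continuous_on_const])
  then have "compact (Kseq v (Suc k))" using IH eq by auto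
  moreover have "Kseq v (Suc k) \<noteq> {}"
    using continuous_attains_inf[OF IH continuous_on_subset[OF cont]] by auto
  ultimately show ?case by simp
qed

lemma exists_lexmin:
  fixes v :: "'n::finite set \<Rightarrow> real"
  assumes g: "simple_game v"
  shows "\<exists>x. lex_minimal v x"
proof -
  let ?N = "card (Pow (UNIV::'n set))"
  obtain x0 where x0: "x0 \<in> Kseq v ?N" using Kseq_ok[OF g, of ?N] by auto
  let ?x = "\<lambda>j. x0$j"
  have len: "\<And>y. length (excess_vector v y) = ?N" by (simp add: EV_LL length_LL)
  have xK: "\<And>j. j \<le> ?N \<Longrightarrow> x0 \<in> Kseq v j" using Kseq_anti[of _ ?N v] x0 by auto
  have "lex_minimal v ?x"
    unfolding lex_minimal_def
  proof (intro conjI allI impI notI)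
    show "coal_sum ?x UNIV \<le> 1" using xK[of 0] by (simp add: coal_sum_def)
  next
    fix y assume y: "coal_sum y UNIV \<le> 1" and lx: "lex_smaller (excess_vector v y) (excess_vector v ?x)"
    then obtain k where k: "k < ?N" and tk: "take k (excess_vector v y) = take k (excess_vector v ?x)"
      and lt: "excess_vector v y ! k < excess_vector v ?x ! k"
      unfolding lex_smaller_def len by blast
    define z where "z = (\<chi> j. y j)"
    have zy: "(\<lambda>j. z$j) = y" unfolding z_def by simp
    have Fz: "\<And>i. Fv v i z = excess_vector v y ! i" unfolding Fv_def zy ..
    have Fx: "\<And>i. Fv v i x0 = excess_vector v ?x ! i" unfolding Fv_def ..
    have eqb: "\<And>i. i < k \<Longrightarrow> Fv v i z = Fv v i x0" 
    proof -
      fix i assume "i < k"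
      then have "take k (excess_vector v y) ! i = take k (excess_vector v ?x) ! i" using tk by simp
      then show "Fv v i z = Fv v i x0" using \<open>i < k\<close> Fz Fx by simp
    qed
    have "\<And>j. j \<le> k \<Longrightarrow> z \<in> Kseq v j"
    proof -
      fix j show "j \<le> k \<Longrightarrow> z \<in> Kseq v j"
      proof (induction j)
        case 0
        have "Fv v 0 x0 \<le> Fv v 0 0" using xK[of 0] by simp
        moreover have "Fv v 0 z \<le> Fv v 0 x0"
          using eqb[of 0] lt Fz Fx by (cases "k = 0") auto
        moreover have "(\<Sum>j\<in>UNIV. z$j) \<le> 1" using y zy by (simp add: coal_sum_def)
        ultimately show ?case by simp
      next
        case (Suc j)
        then have zj: "z \<in> Kseq v j" and jk: "j < k" by auto
        have "x0 \<in> Kseq v (Suc j)" using xK[of "Suc j"] jk k by simp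
        then have "\<forall>w\<in>Kseq v j. Fv v j x0 \<le> Fv v j w" by simp
        then show ?case using zj eqb[OF jk] by simp
      qed
    qed
    then have zk: "z \<in> Kseq v k" by simp
    have "x0 \<in> Kseq v (Suc k)" using xK[of "Suc k"] k by simp
    then have "Fv v k x0 \<le> Fv v k z" using zk by simp
    then show False using lt Fz Fx by simp
  qed
  then show ?thesis by blast
qed


theorem theorem5:
  fixes v :: "'n::finite set \<Rightarrow> real" and i :: 'n
  assumes "simple_game v"
    and "nucleolus v i < 1"
  shows "nucleolus v i \<le> 1 / 2"
proof -
  have "\<exists>!x. lex_minimal v x"
    using exists_lexmin[OF assms(1)] unique by blast
  then have "lex_minimal v (nucleolus v)"
    unfolding nucleolus_def by (rule theI')
  then show ?thesis using main[of v "nucleolus v" i] assms by blast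
qed

end
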